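(* Let $n\geq5$ and $J=J(P_n)$. Let $u,v\in G(J)$ be such that $x_{n-1}x_{n-4}$ divides $u$ and $x_nx_{n-3}$ divides $v$. Then $uv$ is not a minimal generator of $J^2$. Moreover, there exists a $2$-fold product $pw\in F(J^2)$ such that $pw$ divides $uv$ and $pw>_{\mathcal R}uv$.
   Context: Let $K$ be a field. For $m\geq 1$, $P_m$ is the path graph on vertices $x_1,\ldots,x_m$ with edges $\{x_i,x_{i+1}\}$. The cover ideal $J(P_m)$ is generated by the monomials $\prod_{x\in C}x$ with $C$ a minimal vertex cover of $P_m$. For a monomial ideal $I$, $G(I)$ is its set of minimal monomial generators and $F(I^2)=\{uv:u,v\in G(I)\}$. The rooted list $\mathcal R(P_m)$ is defined recursively: $\mathcal R(P_1)$ empty; $\mathcal R(P_2)=x_1,x_2$; $\mathcal R(P_3)=x_2,x_1x_3$; $\mathcal R(P_4)=x_1x_3,x_2x_3,x_2x_4$; for $m\geq5$, if $\mathcal R(P_{m-2})=u_1,\ldots,u_r$ and $\mathcal R(P_{m-3})=v_1,\ldots,v_s$, then $\mathcal R(P_m)=x_{m-1}u_1,\ldots,x_{m-1}u_r,x_mx_{m-2}v_1,\ldots,x_mx_{m-2}v_s$; it lists each element of $G(J(P_m))$ once. With $\mathcal R(P_m)=u_1,\ldots,u_q$, each $M\in F(J(P_m)^2)$ can be written $u_1^{a_1}\cdots u_q^{a_q}$ with $a_i\geq0$, $\sum a_i=2$; the maximal expression of $M$ is the one with lexicographically largest exponent vector. The rooted order on $F(J(P_m)^2)$: $M>_{\mathcal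 R}N$ iff the exponent vector of the maximal expression of $M$ is lexicographically larger than that of $N$. *)

theory Defs
  imports Main "HOL-Library.Multiset"
begin

text \<open>Monomials in the variables x_1, x_2, ... are encoded as multisets of indices:
  the monomial x_1^2 x_3 is the multiset {#1,1,3#}; multiplication is multiset sum
  and divisibility is multiset inclusion.\<close>

type_synonym monomial = "nat multiset"

definition path_edges :: "nat \<Rightarrow> nat set set" where
  "path_edges m = {{i, Suc i} | i. 1 \<le> i \<and> Suc i \<le> m}"

definition is_vertex_cover :: "nat \<Rightarrow> nat set \<Rightarrow> bool" where
  "is_vertex_cover m C \<longleftrightarrow> C \<subseteq> {1..m} \<and> (\<forall>e\<in>path_edges m. e \<inter> C \<noteq> {})"

definition is_min_vertex_cover :: "nat \<Rightarrow> nat set \<Rightarrow> bool" where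
  "is_min_vertex_cover m C \<longleftrightarrow> is_vertex_cover m C \<and>
     (\<forall>D. D \<subset> C \<longrightarrow> \<not> is_vertex_cover m D)"

text \<open>G(J(P_m)): the minimal monomial generators of the cover ideal.\<close>
definition cover_gens :: "nat \<Rightarrow> monomial set" where
  "cover_gens m = {mset_set C | C. is_min_vertex_cover m C}"

definition F2 :: "monomial set \<Rightarrow> monomial set" where
  "F2 G = {u + v | u v. u \<in> G \<and> v \<in> G}"

definition min_gens_sq :: "monomial set \<Rightarrow> monomial set" where
  "min_gens_sq G = {M \<in> F2 G. \<not> (\<exists>N \<in> F2 G. N \<subset># M)}"

fun rooted_list :: "nat \<Rightarrow> monomial list" where
  "rooted_list 0 = []"
| "rooted_list (Suc 0) = []"
| "rooted_list (Suc (Suc 0)) = [{#1#}, {#2#}]"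
| "rooted_list (Suc (Suc (Suc 0))) = [{#2#}, {#1, 3#}]"
| "rooted_list (Suc (Suc (Suc (Suc 0)))) = [{#1, 3#}, {#2, 3#}, {#2, 4#}]"
| "rooted_list (Suc (Suc (Suc (Suc (Suc k))))) =
     map (\<lambda>u. add_mset (k + 4) u) (rooted_list (k + 3)) @
     map (\<lambda>v. add_mset (k + 5) (add_mset (k + 3) v)) (rooted_list (k + 2))"

definition expressions :: "monomial list \<Rightarrow> monomial \<Rightarrow> nat list set" where
  "expressions R M = {a. length a = length R \<and> sum_list a = 2 \<and>
      (\<Sum>i<length R. repeat_mset (a ! i) (R ! i)) = M}"

definition max_expression :: "monomial list \<Rightarrow> monomial \<Rightarrow> nat list" where
  "max_expression R M = (THE a. a \<in> expressions R M \<and>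
      (\<forall>b \<in> expressions R M. b = a \<or> lexordp (<) b a))"

definition rooted_gt :: "nat \<Rightarrow> monomial \<Rightarrow> monomial \<Rightarrow> bool" where
  "rooted_gt m M N \<longleftrightarrow>
     lexordp (<) (max_expression (rooted_list m) N) (max_expression (rooted_list m) M)"

end

theory Submission
  imports Defs
begin

lemma lex_conv: "List.lexordp (<) xs ys \<longleftrightarrow> ord_class.lexordp (xs::nat list) ys"
  by (simp add: List.lexordp_def lexordp_conv_lexord)

definition mvc :: "nat \<Rightarrow> nat set \<Rightarrow> bool" where
  "mvc m C \<longleftrightarrow> C \<subseteq> {1..m} \<and> (\<forall>i. 1 \<le> i \<and> i < m \<longrightarrow> i \<in> C \<or> Suc i \<in> C) \<and>
     (\<forall>c\<in>C. (2 \<le> c \<and> c - 1 \<notin> C) \<or> (c < m \<and> Suc c \<notin> C))"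

lemma vc_iff: "is_vertex_cover m C \<longleftrightarrow> C \<subseteq> {1..m} \<and> (\<forall>i. 1 \<le> i \<and> i < m \<longrightarrow> i \<in> C \<or> Suc i \<in> C)"
proof -
  have "(\<forall>e\<in>path_edges m. e \<inter> C \<noteq> {}) \<longleftrightarrow> (\<forall>i. 1 \<le> i \<and> i < m \<longrightarrow> i \<in> C \<or> Suc i \<in> C)"
  proof
    assume h: "\<forall>e\<in>path_edges m. e \<inter> C \<noteq> {}"
    show "\<forall>i. 1 \<le> i \<and> i < m \<longrightarrow> i \<in> C \<or> Suc i \<in> C"
    proof (intro allI impI)
      fix i assume "1 \<le> i \<and> i < m"
      then have "{i, Suc i} \<in> path_edges m" unfolding path_edges_def by auto
      then show "i \<in> C \<or> Suc i \<in> C" using h by auto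
    qed
  next
    assume h: "\<forall>i. 1 \<le> i \<and> i < m \<longrightarrow> i \<in> C \<or> Suc i \<in> C"
    show "\<forall>e\<in>path_edges m. e \<inter> C \<noteq> {}"
      using h unfolding path_edges_def by fastforce
  qed
  then show ?thesis unfolding is_vertex_cover_def by blast
qed

lemma mvc_iff: "is_min_vertex_cover m C \<longleftrightarrow> mvc m C"
proof
  assume a: "is_min_vertex_cover m C"
  hence vc: "is_vertex_cover m C" by (simp add: is_min_vertex_cover_def)
  have "(2 \<le> c \<and> c - 1 \<notin> C) \<or> (c < m \<and> Suc c \<notin> C)" if c: "c \<in> C" for c
  proof (rule ccontr)
    assume nc: "\<not> ?thesis"
    have "is_vertex_cover m (C - {c})"
      unfolding vc_iff
    proof (intro conjI allI impI)
      show "C - {c} \<subseteq> {1..m}" using vc unfolding vc_iff by auto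
      fix i assume i: "1 \<le> i \<and> i < m"
      then have "i \<in> C \<or> Suc i \<in> C" using vc unfolding vc_iff by auto
      moreover have "\<not> (i = c \<and> Suc i \<notin> C)" using nc i by auto
      moreover have "\<not> (Suc i = c \<and> i \<notin> C)" using nc i by auto
      ultimately show "i \<in> C - {c} \<or> Suc i \<in> C - {c}" by auto
    qed
    moreover have "C - {c} \<subset> C" using c by auto
    ultimately show False using a by (simp add: is_min_vertex_cover_def)
  qed
  then show "mvc m C" using vc unfolding mvc_def vc_iff by blast
next
  assume a: "mvc m C"
  have "\<not> is_vertex_cover m D" if D: "D \<subset> C" for D
  proof
    assume vd: "is_vertex_cover m D"
    obtain c where c: "c \<in> C" "c \<notin> D" using D by auto
    have "c \<in> {1..m}" using a c unfolding mvc_def by auto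
    from a c have "(2 \<le> c \<and> c - 1 \<notin> C) \<or> (c < m \<and> Suc c \<notin> C)" unfolding mvc_def by auto
    then show False
    proof
      assume h: "2 \<le> c \<and> c - 1 \<notin> C"
      then have "c - 1 \<in> D \<or> Suc (c - 1) \<in> D" using vd \<open>c \<in> {1..m}\<close> unfolding vc_iff
        by (metis One_nat_def Suc_diff_le Suc_le_lessD atLeastAtMost_iff diff_Suc_Suc less_Suc_eq_le numeral_2_eq_2 diff_zero le_diff_conv)
      then show False using h c D by auto
    next
      assume h: "c < m \<and> Suc c \<notin> C"
      then have "c \<in> D \<or> Suc c \<in> D" using vd \<open>c \<in> {1..m}\<close> unfolding vc_iff by auto
      then show False using h c D by auto
    qed
  qed
  then show "is_min_vertex_cover m C" using a unfolding is_min_vertex_cover_def mvc_def vc_iff by blast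
qed


lemma mvc_fin: "mvc m C \<Longrightarrow> finite C"
  unfolding mvc_def using finite_subset by blast

lemma mvc_0: "mvc 0 C \<Longrightarrow> C = {}"
  unfolding mvc_def by auto

lemma mvc_1: "mvc 1 C \<Longrightarrow> C = {}"
  unfolding mvc_def by fastforce

lemma mvc_top: "mvc (Suc (Suc k)) C \<Longrightarrow> Suc k \<in> C \<or> Suc (Suc k) \<in> C"
  unfolding mvc_def by auto

lemma decomp1:
  assumes "mvc (k+2) C" "k+1 \<in> C"
  shows "k+2 \<notin> C \<and> mvc k (C - {k+1})"
proof -
  have a1: "C \<subseteq> {1..k+2}" and a2: "\<forall>i. 1 \<le> i \<and> i < k+2 \<longrightarrow> i \<in> C \<or> Suc i \<in> C"
    and a3: "\<forall>c\<in>C. (2 \<le> c \<and> c - 1 \<notin> C) \<or> (c < k+2 \<and> Suc c \<notin> C)"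
    using assms unfolding mvc_def by auto
  have n: "k+2 \<notin> C"
  proof
    assume "k+2 \<in> C" then show False using a3 assms(2) by fastforce
  qed
  have sub: "C - {k+1} \<subseteq> {1..k}"
  proof
    fix x assume x: "x \<in> C - {k+1}"
    then have "x \<in> {1..k+2}" "x \<noteq> k+1" "x \<noteq> k+2" using a1 n by auto
    then show "x \<in> {1..k}" by auto
  qed
  moreover have "\<forall>i. 1 \<le> i \<and> i < k \<longrightarrow> i \<in> C - {k+1} \<or> Suc i \<in> C - {k+1}"
    using a2 by auto
  moreover have "\<forall>c\<in>C - {k+1}. (2 \<le> c \<and> c - 1 \<notin> C - {k+1}) \<or> (c < k \<and> Suc c \<notin> C - {k+1})"
  proof
    fix c assume c: "c \<in> C - {k+1}"
    then have "c \<le> k" using sub by auto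
    then show "(2 \<le> c \<and> c - 1 \<notin> C - {k+1}) \<or> (c < k \<and> Suc c \<notin> C - {k+1})"
      using a3 c assms(2) by (cases "c = k") auto
  qed
  ultimately show ?thesis using n unfolding mvc_def by blast
qed

lemma decomp2:
  assumes "mvc (k+3) C" "k+3 \<in> C"
  shows "k+2 \<notin> C \<and> k+1 \<in> C \<and> mvc k (C - {k+3, k+1})"
proof -
  have a1: "C \<subseteq> {1..k+3}" and a2: "\<forall>i. 1 \<le> i \<and> i < k+3 \<longrightarrow> i \<in> C \<or> Suc i \<in> C"
    and a3: "\<forall>c\<in>C. (2 \<le> c \<and> c - 1 \<notin> C) \<or> (c < k+3 \<and> Suc c \<notin> C)"
    using assms unfolding mvc_def by auto
  have n: "k+2 \<notin> C" using a3 assms(2) by fastforce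
  have n1: "k+1 \<in> C" using a2[rule_format, of "k+1"] n by auto
  have sub: "C - {k+3, k+1} \<subseteq> {1..k}"
  proof
    fix x assume x: "x \<in> C - {k+3, k+1}"
    then have "x \<in> {1..k+3}" "x \<noteq> k+1" "x \<noteq> k+2" "x \<noteq> k+3" using a1 n by auto
    then show "x \<in> {1..k}" by auto
  qed
  moreover have "\<forall>i. 1 \<le> i \<and> i < k \<longrightarrow> i \<in> C - {k+3, k+1} \<or> Suc i \<in> C - {k+3, k+1}"
    using a2 by auto
  moreover have "\<forall>c\<in>C - {k+3, k+1}. (2 \<le> c \<and> c - 1 \<notin> C - {k+3, k+1}) \<or> (c < k \<and> Suc c \<notin> C - {k+3, k+1})"
  proof
    fix c assume c: "c \<in> C - {k+3, k+1}"
    then have "c \<le> k" using sub by auto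
    then show "(2 \<le> c \<and> c - 1 \<notin> C - {k+3, k+1}) \<or> (c < k \<and> Suc c \<notin> C - {k+3, k+1})"
      using a3 c n1 by (cases "c = k") auto
  qed
  ultimately show ?thesis using n n1 unfolding mvc_def by blast
qed

lemma build1:
  assumes "mvc k C"
  shows "mvc (k+2) (insert (k+1) C)"
proof -
  have a1: "C \<subseteq> {1..k}" and a2: "\<forall>i. 1 \<le> i \<and> i < k \<longrightarrow> i \<in> C \<or> Suc i \<in> C"
    and a3: "\<forall>c\<in>C. (2 \<le> c \<and> c - 1 \<notin> C) \<or> (c < k \<and> Suc c \<notin> C)"
    using assms unfolding mvc_def by auto
  have "insert (k+1) C \<subseteq> {1..k+2}" using a1 by auto
  moreover have "\<forall>i. 1 \<le> i \<and> i < k+2 \<longrightarrow> i \<in> insert (k+1) C \<or> Suc i \<in> insert (k+1) C"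
  proof (intro allI impI)
    fix i assume i: "1 \<le> i \<and> i < k+2"
    show "i \<in> insert (k+1) C \<or> Suc i \<in> insert (k+1) C"
      using a2[rule_format, of i] i by (cases "i < k") auto
  qed
  moreover have "\<forall>c\<in>insert (k+1) C. (2 \<le> c \<and> c - 1 \<notin> insert (k+1) C) \<or> (c < k+2 \<and> Suc c \<notin> insert (k+1) C)"
  proof
    fix c assume c: "c \<in> insert (k+1) C"
    show "(2 \<le> c \<and> c - 1 \<notin> insert (k+1) C) \<or> (c < k+2 \<and> Suc c \<notin> insert (k+1) C)"
    proof (cases "c = k+1")
      case True then show ?thesis using a1 by auto
    next
      case False
      then have "c \<in> C" "c \<le> k" "1 \<le> c" using c a1 by auto
      then show ?thesis using a3 a1 by fastforce
    qed
  qed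
  ultimately show ?thesis unfolding mvc_def by blast
qed

lemma build2:
  assumes "mvc k C"
  shows "mvc (k+3) (insert (k+3) (insert (k+1) C))"
proof -
  have a1: "C \<subseteq> {1..k}" and a2: "\<forall>i. 1 \<le> i \<and> i < k \<longrightarrow> i \<in> C \<or> Suc i \<in> C"
    and a3: "\<forall>c\<in>C. (2 \<le> c \<and> c - 1 \<notin> C) \<or> (c < k \<and> Suc c \<notin> C)"
    using assms unfolding mvc_def by auto
  let ?D = "insert (k+3) (insert (k+1) C)"
  have "?D \<subseteq> {1..k+3}" using a1 by auto
  moreover have "\<forall>i. 1 \<le> i \<and> i < k+3 \<longrightarrow> i \<in> ?D \<or> Suc i \<in> ?D"
  proof (intro allI impI)
    fix i assume i: "1 \<le> i \<and> i < k+3"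
    show "i \<in> ?D \<or> Suc i \<in> ?D"
      using a2[rule_format, of i] i by (cases "i < k") auto
  qed
  moreover have "\<forall>c\<in>?D. (2 \<le> c \<and> c - 1 \<notin> ?D) \<or> (c < k+3 \<and> Suc c \<notin> ?D)"
  proof
    fix c assume c: "c \<in> ?D"
    show "(2 \<le> c \<and> c - 1 \<notin> ?D) \<or> (c < k+3 \<and> Suc c \<notin> ?D)"
    proof (cases "c = k+1 \<or> c = k+3")
      case True then show ?thesis using a1 by auto
    next
      case False
      then have "c \<in> C" "c \<le> k" "1 \<le> c" using c a1 by auto
      then show ?thesis using a3 a1 by fastforce
    qed
  qed
  ultimately show ?thesis unfolding mvc_def by blast
qed


lemma R2: "rooted_list 2 = [{#1#}, {#2#}]" by (simp add: numeral_eq_Suc)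
lemma R3: "rooted_list 3 = [{#2#}, {#1, 3#}]" by (simp add: numeral_eq_Suc)
lemma R4: "rooted_list 4 = [{#1, 3#}, {#2, 3#}, {#2, 4#}]" by (simp add: numeral_eq_Suc)
lemma Rrec: "rooted_list (k+5) = map (\<lambda>u. add_mset (k + 4) u) (rooted_list (k + 3)) @
     map (\<lambda>v. add_mset (k + 5) (add_mset (k + 3) v)) (rooted_list (k + 2))"
  by (simp add: numeral_eq_Suc)

lemma mvc_empty0: "mvc 0 {}" unfolding mvc_def by auto
lemma mvc_empty1: "mvc 1 {}" unfolding mvc_def by auto
lemma mvc_2_2: "mvc 2 {2}" unfolding mvc_def by auto

lemma mvc_small:
  "mvc 2 {1}" "mvc 2 {2}" "mvc 3 {2}" "mvc 3 {1,3}" "mvc 4 {1,3}" "mvc 4 {2,3}" "mvc 4 {2,4}"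
  unfolding mvc_def by auto

lemma add_mset_set: "finite C \<Longrightarrow> a \<notin> C \<Longrightarrow> add_mset a (mset_set C) = mset_set (insert a C)"
  by simp

lemma soundness:
  "m \<ge> 2 \<Longrightarrow> x \<in> set (rooted_list m) \<Longrightarrow> \<exists>C. x = mset_set C \<and> mvc m C"
proof (induction m arbitrary: x rule: less_induct)
  case (less m)
  consider "m = 2" | "m = 3" | "m = 4" | k where "m = k + 5"
    using less.prems(1) by (metis add.commute le_Suc_ex numeral_eq_Suc not_less_eq_eq
      add_Suc_right Suc_le_eq less_Suc_eq add_2_eq_Suc' Suc_eq_plus1 numeral_Bit1 numeral_One one_add_one pred_numeral_simps(2) eval_nat_numeral(3))
  then show ?case
  proof cases
    case 1
    then have "x \<in> {mset_set {1}, mset_set {2}}" using less.prems by (simp add: R2)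
    then show ?thesis using mvc_small 1 by blast
  next
    case 2
    then have "x \<in> {mset_set {2}, mset_set {1,3}}" using less.prems by (simp add: R3)
    then show ?thesis using mvc_small 2 by blast
  next
    case 3
    then have "x \<in> {mset_set {1,3}, mset_set {2,3}, mset_set {2,4}}" using less.prems by (simp add: R4)
    then show ?thesis using mvc_small 3 by blast
  next
    case 4
    from less.prems(2) consider (a) y where "y \<in> set (rooted_list (k+3))" "x = add_mset (k+4) y"
      | (b) y where "y \<in> set (rooted_list (k+2))" "x = add_mset (k+5) (add_mset (k+3) y)"
      unfolding 4 Rrec by auto
    then show ?thesis
    proof cases
      case a
      obtain C where C: "y = mset_set C" "mvc (k+3) C" using less.IH[of "k+3" y] a 4 by auto
      have "k+4 \<notin> C" using C(2) unfolding mvc_def by auto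
      then have "x = mset_set (insert (k+4) C)" using a C mvc_fin by simp
      moreover have "mvc m (insert (k+4) C)"
      proof -
        have e: "k+3+2 = k+5" "k+3+1 = k+4" by simp_all
        show ?thesis unfolding 4 using build1[OF C(2), unfolded e] .
      qed
      ultimately show ?thesis by blast
    next
      case b
      obtain C where C: "y = mset_set C" "mvc (k+2) C" using less.IH[of "k+2" y] b 4 by auto
      have "k+3 \<notin> C" "k+5 \<notin> C" using C(2) unfolding mvc_def by auto
      then have "x = mset_set (insert (k+5) (insert (k+3) C))" using b C mvc_fin by simp
      moreover have "mvc m (insert (k+5) (insert (k+3) C))"
      proof -
        have e: "k+2+3 = k+5" "k+2+1 = k+3" by simp_all
        show ?thesis unfolding 4 using build2[OF C(2), unfolded e] .
      qed
      ultimately show ?thesis by blast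
    qed
  qed
qed


lemma mvc2_cases: "mvc 2 C \<Longrightarrow> C = {1} \<or> C = {2}"
proof -
  assume a: "mvc 2 C"
  have "1 \<in> C \<or> 2 \<in> C" using mvc_top[of 0 C] a by (simp add: numeral_2_eq_2)
  moreover have "1 \<in> C \<Longrightarrow> C = {1}"
  proof -
    assume h: "1 \<in> C"
    have "2 \<notin> C \<and> mvc 0 (C - {1})" using decomp1[of 0 C] a h by (simp add: numeral_2_eq_2)
    then show "C = {1}" using mvc_0 h by blast
  qed
  moreover have "2 \<in> C \<Longrightarrow> 1 \<notin> C \<Longrightarrow> C = {2}"
  proof -
    assume h: "2 \<in> C" "1 \<notin> C"
    have "C \<subseteq> {1..2}" using a unfolding mvc_def by auto
    then show "C = {2}" using h by (auto simp: numeral_2_eq_2 le_Suc_eq)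
  qed
  ultimately show ?thesis by blast
qed

lemma completeness:
  "m \<ge> 2 \<Longrightarrow> mvc m C \<Longrightarrow> mset_set C \<in> set (rooted_list m)"
proof (induction m arbitrary: C rule: less_induct)
  case (less m)
  consider "m = 2" | "m = 3" | "m = 4" | k where "m = k + 5"
    using less.prems(1) by (metis add.commute le_Suc_ex numeral_eq_Suc not_less_eq_eq
      add_Suc_right Suc_le_eq less_Suc_eq add_2_eq_Suc' Suc_eq_plus1 numeral_Bit1 numeral_One one_add_one pred_numeral_simps(2) eval_nat_numeral(3))
  then show ?case
  proof cases
    case 1
    then have "C = {1} \<or> C = {2}" using mvc2_cases less.prems by simp
    then show ?thesis using 1 by (auto simp: R2)
  next
    case 2
    have "2 \<in> C \<or> 3 \<in> C" using mvc_top[of 1 C] less.prems 2 by (simp add: numeral_eq_Suc)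
    moreover have "2 \<in> C \<Longrightarrow> C = {2}"
    proof -
      assume h: "2 \<in> C"
      have "3 \<notin> C \<and> mvc 1 (C - {2})" using decomp1[of 1 C] less.prems 2 h by (simp add: numeral_eq_Suc)
      then show "C = {2}" using mvc_1 h by blast
    qed
    moreover have "3 \<in> C \<Longrightarrow> C = {1,3}"
    proof -
      assume h: "3 \<in> C"
      have "2 \<notin> C \<and> 1 \<in> C \<and> mvc 0 (C - {3, 1})" using decomp2[of 0 C] less.prems 2 h by (simp add: numeral_eq_Suc)
      then show "C = {1,3}" using mvc_0 h by blast
    qed
    ultimately show ?thesis using 2 by (auto simp: R3)
  next
    case 3
    have "3 \<in> C \<or> 4 \<in> C" using mvc_top[of 2 C] less.prems 3 by (simp add: numeral_eq_Suc)
    moreover have "3 \<in> C \<Longrightarrow> C = {1,3} \<or> C = {2,3}"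
    proof -
      assume h: "3 \<in> C"
      have "4 \<notin> C \<and> mvc 2 (C - {3})" using decomp1[of 2 C] less.prems 3 h by (simp add: numeral_eq_Suc)
      then have "C - {3} = {1} \<or> C - {3} = {2}" using mvc2_cases by blast
      then show "C = {1,3} \<or> C = {2,3}" using h by blast
    qed
    moreover have "4 \<in> C \<Longrightarrow> C = {2,4}"
    proof -
      assume h: "4 \<in> C"
      have "3 \<notin> C \<and> 2 \<in> C \<and> mvc 1 (C - {4, 2})" using decomp2[of 1 C] less.prems 3 h by (simp add: numeral_eq_Suc)
      then show "C = {2,4}" using mvc_1 h by blast
    qed
    ultimately show ?thesis using 3 by (auto simp: R4)
  next
    case 4
    have mC: "mvc (k+5) C" using less.prems 4 by simp
    have fin: "finite C" using mC mvc_fin by blast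
    have "k+4 \<in> C \<or> k+5 \<in> C" using mvc_top[of "k+3" C] mC by (simp add: numeral_eq_Suc)
    moreover have "k+4 \<in> C \<Longrightarrow> ?thesis"
    proof -
      assume h: "k+4 \<in> C"
      have "k+5 \<notin> C \<and> mvc (k+3) (C - {k+4})" using decomp1[of "k+3" C] mC h
        by (simp add: numeral_eq_Suc)
      then have "mset_set (C - {k+4}) \<in> set (rooted_list (k+3))" using less.IH[of "k+3"] 4 by simp
      moreover have "mset_set C = add_mset (k+4) (mset_set (C - {k+4}))"
        using h fin by (metis add_mset_set finite_Diff insert_Diff Diff_iff singletonI)
      ultimately show ?thesis unfolding 4 Rrec by auto
    qed
    moreover have "k+5 \<in> C \<Longrightarrow> ?thesis"
    proof -
      assume h: "k+5 \<in> C"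
      have "k+4 \<notin> C \<and> k+3 \<in> C \<and> mvc (k+2) (C - {k+5, k+3})" using decomp2[of "k+2" C] mC h
        by (simp add: numeral_eq_Suc)
      then have m1: "mset_set (C - {k+5, k+3}) \<in> set (rooted_list (k+2))" using less.IH[of "k+2"] 4 by simp
      have "mset_set C = add_mset (k+5) (add_mset (k+3) (mset_set (C - {k+5, k+3})))"
      proof -
        let ?D = "C - {k+5, k+3}"
        have Ceq: "C = insert (k+5) (insert (k+3) ?D)" using h \<open>k+4 \<notin> C \<and> k+3 \<in> C \<and> _\<close> by auto
        have "mset_set (insert (k+5) (insert (k+3) ?D)) = add_mset (k+5) (add_mset (k+3) (mset_set ?D))"
          using fin by simp
        then show ?thesis using Ceq by metis
      qed
      then show ?thesis using m1 unfolding 4 Rrec by auto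
    qed
    ultimately show ?thesis by blast
  qed
qed


lemma L2: "\<exists>Y. rooted_list (k+4) = map (add_mset (k+3)) (rooted_list (k+2)) @ Y \<and> (\<forall>y\<in>set Y. k+3 \<notin># y)"
proof (cases k)
  case 0
  show ?thesis by (rule exI[of _ "[{#2, 4#}]"]) (simp add: 0 R4 R2)
next
  case (Suc j)
  let ?Y = "map (\<lambda>v. add_mset (j + 5) (add_mset (j + 3) v)) (rooted_list (j + 2))"
  have e: "k+4 = j+5" "k+2 = j+3" "k+3 = j+4" using Suc by simp_all
  have "\<forall>y\<in>set ?Y. j+4 \<notin># y"
  proof
    fix y assume "y \<in> set ?Y"
    then obtain v where v: "v \<in> set (rooted_list (j+2))" "y = add_mset (j + 5) (add_mset (j + 3) v)" by auto
    obtain C where C: "v = mset_set C" "mvc (j+2) C" using soundness[of "j+2" v] v by auto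
    have "j+4 \<notin> C" using C(2) unfolding mvc_def by auto
    then show "j+4 \<notin># y" using v C mvc_fin by simp
  qed
  then show ?thesis unfolding e Rrec by blast
qed

lemma L2_idx:
  assumes "i < length (rooted_list (k+4))" "k+3 \<in># rooted_list (k+4) ! i"
  shows "i < length (rooted_list (k+2)) \<and> rooted_list (k+4) ! i = add_mset (k+3) (rooted_list (k+2) ! i)"
proof -
  obtain Y where Y: "rooted_list (k+4) = map (add_mset (k+3)) (rooted_list (k+2)) @ Y" "\<forall>y\<in>set Y. k+3 \<notin># y"
    using L2 by blast
  show ?thesis
  proof (cases "i < length (rooted_list (k+2))")
    case True then show ?thesis using Y(1) by (simp add: nth_append)
  next
    case False
    then have "rooted_list (k+4) ! i \<in> set Y" using Y(1) assms(1) by (simp add: nth_append)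
    then show ?thesis using Y(2) assms(2) by blast
  qed
qed

lemma L1K: "m \<ge> 2 \<Longrightarrow> \<exists>K. \<forall>i<length (rooted_list m). (i < K \<longleftrightarrow> m - 1 \<in># rooted_list m ! i)"
proof -
  assume m: "m \<ge> 2"
  consider "m = 2" | "m = 3" | k where "m = k + 4"
    using m by (metis add.commute le_Suc_ex numeral_eq_Suc not_less_eq_eq
      add_Suc_right Suc_le_eq less_Suc_eq add_2_eq_Suc' Suc_eq_plus1 numeral_Bit1 numeral_One one_add_one pred_numeral_simps(2) eval_nat_numeral(3))
  then show ?thesis
  proof cases
    case 1 then show ?thesis by (intro exI[of _ 1]) (auto simp: R2 less_Suc_eq)
  next
    case 2 then show ?thesis by (intro exI[of _ 1]) (auto simp: R3 less_Suc_eq)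
  next
    case 3
    obtain Y where Y: "rooted_list (k+4) = map (add_mset (k+3)) (rooted_list (k+2)) @ Y" "\<forall>y\<in>set Y. k+3 \<notin># y"
      using L2 by blast
    show ?thesis
    proof (intro exI[of _ "length (rooted_list (k+2))"] allI impI)
      fix i assume i: "i < length (rooted_list m)"
      show "(i < length (rooted_list (k+2))) \<longleftrightarrow> m - 1 \<in># rooted_list m ! i"
      proof (cases "i < length (rooted_list (k+2))")
        case True then show ?thesis using Y(1) 3 by (simp add: nth_append)
      next
        case False
        then have "rooted_list m ! i \<in> set Y" using Y(1) i 3 by (simp add: nth_append)
        then have "k + 3 \<notin># rooted_list m ! i" using Y(2) by blast
        moreover have "m - 1 = k + 3" using 3 by simp
        ultimately show ?thesis using False by simp
      qed
    qed
  qed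
qed

lemma L1:
  assumes "m \<ge> 2" "i < length (rooted_list m)" "j < length (rooted_list m)"
    "m - 1 \<in># rooted_list m ! i" "m - 1 \<notin># rooted_list m ! j"
  shows "i < j"
proof -
  obtain K where K: "\<forall>i<length (rooted_list m). (i < K \<longleftrightarrow> m - 1 \<in># rooted_list m ! i)"
    using L1K[OF assms(1)] by blast
  then show ?thesis using assms by (meson leI less_le_trans)
qed


definition ev :: "nat \<Rightarrow> nat \<Rightarrow> nat \<Rightarrow> nat list" where
  "ev L i j = map (\<lambda>t. (if t = i then 1 else 0) + (if t = j then 1 else 0)) [0..<L]"

lemma ev_nth: "t < L \<Longrightarrow> ev L i j ! t = (if t = i then 1 else 0) + (if t = j then 1 else 0)"
  unfolding ev_def by simp

lemma ev_len[simp]: "length (ev L i j) = L" unfolding ev_def by simp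

lemma sum_rep:
  assumes "i < length R" "j < length R"
  shows "(\<Sum>t<length R. repeat_mset (ev (length R) i j ! t) (R ! t)) = R ! i + R ! j"
proof -
  have "(\<Sum>t<length R. repeat_mset (ev (length R) i j ! t) (R ! t)) =
        (\<Sum>t<length R. (if t = i then R ! t else {#}) + (if t = j then R ! t else {#}))"
    by (rule sum.cong) (auto simp: ev_nth repeat_mset_distrib)
  also have "\<dots> = R ! i + R ! j" using assms by (simp add: sum.distrib)
  finally show ?thesis .
qed

lemma ev_sum: "i < L \<Longrightarrow> j < L \<Longrightarrow> sum_list (ev L i j) = 2"
proof -
  assume a: "i < L" "j < L"
  have "sum_list (ev L i j) = (\<Sum>t\<in>{0..<L}. (if t = i then 1 else 0) + (if t = j then 1 else 0))"
    unfolding ev_def by (simp add: interv_sum_list_conv_sum_set_nat)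
  also have "\<dots> = 2" using a by (simp add: sum.distrib)
  finally show ?thesis .
qed

lemma E1:
  assumes "i < length R" "j < length R"
  shows "ev (length R) i j \<in> expressions R (R ! i + R ! j)"
  unfolding expressions_def using assms sum_rep[OF assms] ev_sum[OF assms] by simp

lemma sum0: "sum_list (b::nat list) = 0 \<Longrightarrow> t < length b \<Longrightarrow> b ! t = 0"
  by (simp add: sum_list_eq_0_iff)

lemma sum1: "sum_list (b::nat list) = 1 \<Longrightarrow> \<exists>i<length b. \<forall>t<length b. b ! t = (if t = i then 1 else 0)"
proof (induction b)
  case Nil then show ?case by simp
next
  case (Cons x xs)
  show ?case
  proof (cases x)
    case 0
    then obtain i where i: "i < length xs" "\<forall>t<length xs. xs ! t = (if t = i then 1 else 0)"
      using Cons by auto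
    show ?thesis
      by (rule exI[of _ "Suc i"]) (use i 0 in \<open>auto simp: nth_Cons split: nat.splits\<close>)
  next
    case (Suc y)
    then have "y = 0" "sum_list xs = 0" using Cons.prems by auto
    then show ?thesis using Suc sum0[of xs]
      by (intro exI[of _ 0]) (auto simp: nth_Cons split: nat.splits)
  qed
qed

lemma sum2: "sum_list (b::nat list) = 2 \<Longrightarrow> \<exists>i<length b. \<exists>j<length b. b = ev (length b) i j"
proof (induction b)
  case Nil then show ?case by simp
next
  case (Cons x xs)
  have key: "\<exists>i<length (x#xs). \<exists>j<length (x#xs). \<forall>t<length (x#xs). (x#xs) ! t = (if t = i then 1 else 0) + (if t = j then 1 else 0)"
  proof (cases x)
    case 0
    then obtain i j where ij: "i < length xs" "j < length xs" "xs = ev (length xs) i j"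
      using Cons by auto
    have nx: "xs ! t = (if t = i then 1 else 0) + (if t = j then 1 else 0)" if "t < length xs" for t
    proof -
      have "xs ! t = ev (length xs) i j ! t" using ij(3) by (rule arg_cong[where f="\<lambda>l. l ! t"])
      also have "\<dots> = (if t = i then 1 else 0) + (if t = j then 1 else 0)" using that by (rule ev_nth)
      finally show ?thesis .
    qed
    show ?thesis
      apply (rule exI[of _ "Suc i"]) apply (intro conjI) using ij apply simp
      apply (rule exI[of _ "Suc j"]) apply (intro conjI) using ij apply simp
      using nx 0 by (auto simp: nth_Cons split: nat.splits)
  next
    case (Suc y)
    show ?thesis
    proof (cases y)
      case 0
      then have "sum_list xs = 1" using Cons.prems Suc by auto
      then obtain i where i: "i < length xs" "\<forall>t<length xs. xs ! t = (if t = i then 1 else 0)"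
        using sum1 by blast
      show ?thesis
        apply (rule exI[of _ 0]) apply simp
        apply (rule exI[of _ "Suc i"]) apply (intro conjI) using i apply simp
        using i Suc 0 by (auto simp: nth_Cons split: nat.splits)
    next
      case (Suc z)
      then have "z = 0" "sum_list xs = 0" using Cons.prems \<open>x = Suc y\<close> by auto
      then show ?thesis using Suc \<open>x = Suc y\<close> sum0[of xs]
        by (intro exI[of _ 0]) (auto simp: nth_Cons split: nat.splits)
    qed
  qed
  then obtain i j where "i < length (x#xs)" "j < length (x#xs)"
    "\<forall>t<length (x#xs). (x#xs) ! t = (if t = i then 1 else 0) + (if t = j then 1 else 0)" by blast
  then show ?case by (intro exI[of _ i] exI[of _ j]) (auto intro!: nth_equalityI simp: ev_nth)
qed

lemma E2:
  assumes "b \<in> expressions R M"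
  shows "\<exists>i<length R. \<exists>j<length R. b = ev (length R) i j \<and> M = R ! i + R ! j"
proof -
  have b: "length b = length R" "sum_list b = 2" "(\<Sum>i<length R. repeat_mset (b ! i) (R ! i)) = M"
    using assms unfolding expressions_def by auto
  obtain i j where ij: "i < length R" "j < length R" "b = ev (length R) i j" using sum2[OF b(2)] b(1) by auto
  then show ?thesis using b(3) sum_rep[OF ij(1,2)] by auto
qed

lemma E3:
  assumes "c < i" "c < j" "c < d" "i < L" "j < L" "d < L"
  shows "List.lexordp (<) (ev L i j) (ev L c d)"
proof -
  have cL: "c < L" using assms by simp
  have t: "take c (ev L i j) = take c (ev L c d)"
    by (rule nth_equalityI) (use assms in \<open>auto simp: ev_nth\<close>)
  have x: "ev L i j = take c (ev L i j) @ 0 # drop (Suc c) (ev L i j)"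
    using id_take_nth_drop[of c "ev L i j"] cL assms by (simp add: ev_nth)
  have y: "ev L c d = take c (ev L i j) @ 1 # drop (Suc c) (ev L c d)"
    using id_take_nth_drop[of c "ev L c d"] cL assms t by (simp add: ev_nth)
  show ?thesis unfolding lex_conv lexordp_iff
    by (rule disjI2, intro exI conjI) (rule zero_less_one, rule x, rule y)
qed

lemma ex_max: "finite S \<Longrightarrow> S \<noteq> {} \<Longrightarrow> \<exists>a\<in>S. \<forall>b\<in>S. b = a \<or> ord_class.lexordp b (a::nat list)"
proof (induction S rule: finite_ne_induct)
  case (singleton x) then show ?case by simp
next
  case (insert x F)
  then obtain a where a: "a \<in> F" "\<forall>b\<in>F. b = a \<or> ord_class.lexordp b a" by blast
  show ?case
  proof (cases "ord_class.lexordp a x")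
    case True
    then show ?thesis using a by (intro bexI[of _ x]) (auto intro: lexordp_trans)
  next
    case False
    then have "x = a \<or> ord_class.lexordp x a" using lexordp_linear by blast
    then show ?thesis using a by (intro bexI[of _ a]) auto
  qed
qed

lemma MAX:
  assumes "a \<in> expressions R M"
  shows "max_expression R M \<in> expressions R M \<and>
     (\<forall>b\<in>expressions R M. b = max_expression R M \<or> List.lexordp (<) b (max_expression R M))"
proof -
  have "expressions R M \<subseteq> {xs. set xs \<subseteq> {0..2} \<and> length xs = length R}"
    unfolding expressions_def using member_le_sum_list by fastforce
  then have fin: "finite (expressions R M)"
    using finite_lists_length_eq[of "{0..2::nat}" "length R"] finite_subset by blast
  obtain m where m: "m \<in> expressions R M" "\<forall>b\<in>expressions R M. b = m \<or> ord_class.lexordp b m"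
    using ex_max[OF fin] assms by blast
  have "\<exists>!m. m \<in> expressions R M \<and> (\<forall>b\<in>expressions R M. b = m \<or> List.lexordp (<) b m)"
  proof (rule ex1I[of _ m])
    show "m \<in> expressions R M \<and> (\<forall>b\<in>expressions R M. b = m \<or> List.lexordp (<) b m)"
      using m by (simp add: lex_conv)
  next
    fix m' assume h: "m' \<in> expressions R M \<and> (\<forall>b\<in>expressions R M. b = m' \<or> List.lexordp (<) b m')"
    then have "m = m' \<or> ord_class.lexordp m m'" using m by (simp add: lex_conv)
    moreover have "m' = m \<or> ord_class.lexordp m' m" using m h by blast
    ultimately show "m' = m" using lexordp_antisym by blast
  qed
  then show ?thesis unfolding max_expression_def by (rule theI')
qed



lemma mvcD1: "mvc m C \<Longrightarrow> c \<in> C \<Longrightarrow> 1 \<le> c \<and> c \<le> m"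
  unfolding mvc_def by auto
lemma mvcD2: "mvc m C \<Longrightarrow> 1 \<le> i \<Longrightarrow> i < m \<Longrightarrow> i \<in> C \<or> Suc i \<in> C"
  unfolding mvc_def by auto
lemma mvcD3: "mvc m C \<Longrightarrow> c \<in> C \<Longrightarrow> (2 \<le> c \<and> c - 1 \<notin> C) \<or> (c < m \<and> Suc c \<notin> C)"
  unfolding mvc_def by auto
lemma top_excl: "mvc m E \<Longrightarrow> m \<in> E \<Longrightarrow> m - 1 \<notin> E"
  using mvcD3[of m E m] by auto

lemma cnt_ms: "finite S \<Longrightarrow> count (mset_set S) x = (if x \<in> S then 1 else 0)"
  by simp

lemma claim:
  assumes mU: "mvc (k+5) U" and mV: "mvc (k+5) V"
    and U: "k+4 \<in> U" "k+5 \<notin> U"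
      "(k+3 \<in> U \<and> k+2 \<notin> U) \<or> (k+2 \<in> U \<and> k+3 \<notin> U \<and> 1 \<le> k \<and> k \<notin> U \<and> k+1 \<in> U)"
    and V: "k+5 \<in> V" "k+3 \<in> V" "k+2 \<in> V" "k+4 \<notin> V" "k+1 \<notin> V" "1 \<le> k \<longrightarrow> k \<in> V"
    and W: "W = (V \<inter> {..k+1}) \<union> {k+2, k+4}"
    and cnt: "\<And>x. (if x \<in> U then 1 else 0) + (if x \<in> V then 1 else 0) =
                   (if x \<in> C1 then 1 else 0) + (if x \<in> C2 then (1::nat) else 0)"
    and mC1: "mvc (k+5) C1" and mC2: "mvc (k+5) C2" and c1: "k+4 \<in> C1"
    and R: "rooted_list (k+5) ! i1 = mset_set C1" "rooted_list (k+5) ! i2 = mset_set C2"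
      "rooted_list (k+5) ! iw = mset_set W"
    and len: "i1 < length (rooted_list (k+5))" "i2 < length (rooted_list (k+5))"
      "iw < length (rooted_list (k+5))"
  shows "iw < i1 \<and> iw < i2"
proof -
  have fC1: "finite C1" using mC1 mvc_fin by blast
  have fC2: "finite C2" using mC2 mvc_fin by blast
  have fW: "finite W" using W mvc_fin[OF mV] by auto
  have c2_4: "k+4 \<notin> C2" using cnt[of "k+4"] U V c1 by (auto split: if_splits)
  have c2_5: "k+5 \<in> C2" using mvc_top[of "k+3" C2] mC2 c2_4 by (simp add: numeral_eq_Suc)
  have d2: "k+4 \<notin> C2 \<and> k+3 \<in> C2 \<and> mvc (k+2) (C2 - {k+5, k+3})"
    using decomp2[of "k+2" C2] mC2 c2_5 by (simp add: numeral_eq_Suc)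
  have e1: "k + 5 - 1 = k+4" by simp
  have iw2: "iw < i2"
  proof (rule L1[of "k+5"])
    show "k + 5 - 1 \<in># rooted_list (k + 5) ! iw" using R(3) fW W by simp
    show "k + 5 - 1 \<notin># rooted_list (k + 5) ! i2" unfolding e1 R(2) using fC2 c2_4 by simp
  qed (use len in auto)
  have ee: "k+1+4 = k+5" "k+1+3 = k+4" "k+1+2 = k+3" by simp_all
  have Li1: "i1 < length (rooted_list (k+3)) \<and> rooted_list (k+5) ! i1 = add_mset (k+4) (rooted_list (k+3) ! i1)"
    using L2_idx[of i1 "k+1", unfolded ee] len(1) R(1) fC1 c1 by simp
  have Liw: "iw < length (rooted_list (k+3)) \<and> rooted_list (k+5) ! iw = add_mset (k+4) (rooted_list (k+3) ! iw)"
    using L2_idx[of iw "k+1", unfolded ee] len(3) R(3) fW W by simp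
  have eq1: "mset_set C1 = add_mset (k+4) (rooted_list (k+3) ! i1)" by (metis Li1 R(1))
  have eqw: "mset_set W = add_mset (k+4) (rooted_list (k+3) ! iw)" by (metis Liw R(3))
  have memi1: "x \<in># rooted_list (k+3) ! i1" if "x \<in> C1" "x \<noteq> k+4" for x
  proof -
    have "x \<in># mset_set C1" using that fC1 by simp
    then show ?thesis unfolding eq1 using that(2) by simp
  qed
  have memiw: "x \<in># rooted_list (k+3) ! iw" if "x \<in> W" "x \<noteq> k+4" for x
  proof -
    have "x \<in># mset_set W" using that fW by simp
    then show ?thesis unfolding eqw using that(2) by simp
  qed
  have iw1: "iw < i1"
    using U(3)
  proof
    assume u3: "k+3 \<in> U \<and> k+2 \<notin> U"
    have "(if k+3 \<in> C1 then 1 else 0) + (if k+3 \<in> C2 then 1 else 0) = (2::nat)"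
      using cnt[of "k+3"] u3 V(2) by simp
    then have "k+3 \<in> C1" by (simp split: if_splits)
    then have m3: "k+3 \<in># rooted_list (k+3) ! i1" using memi1[of "k+3"] by simp
    have inset: "rooted_list (k+3) ! i1 \<in> set (rooted_list (k+3))" using Li1 by simp
    obtain E where E: "rooted_list (k+3) ! i1 = mset_set E" "mvc (k+3) E"
      using soundness[OF _ inset] by auto
    have fE: "finite E" using E(2) mvc_fin by blast
    have "k+3 \<in> E" using m3 fE unfolding E(1) by simp
    then have "k+3-1 \<notin> E" using top_excl[OF E(2)] by blast
    then have n2: "k+3-1 \<notin># rooted_list (k+3) ! i1" using fE unfolding E(1) by simp
    have "k+2 \<in> W" using W by simp
    then have w2: "k+3-1 \<in># rooted_list (k+3) ! iw" using memiw[of "k+2"] by simp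
    show "iw < i1" using L1[of "k+3" iw i1] w2 n2 Li1 Liw by simp
  next
    assume u2: "k+2 \<in> U \<and> k+3 \<notin> U \<and> 1 \<le> k \<and> k \<notin> U \<and> k+1 \<in> U"
    then obtain j where j: "k = j+1" by (metis add.commute le_Suc_ex Suc_eq_plus1)
    have "(if k+3 \<in> C1 then 1 else 0) + (if k+3 \<in> C2 then 1 else 0) = (1::nat)"
      using cnt[of "k+3"] u2 V(2) by simp
    then have c1_3: "k+3 \<notin> C1" using d2 by (simp split: if_splits)
    have "(if k+2 \<in> C1 then 1 else 0) + (if k+2 \<in> C2 then 1 else 0) = (2::nat)"
      using cnt[of "k+2"] u2 V(3) by simp
    then have c1_2: "k+2 \<in> C1" and c2_2: "k+2 \<in> C2" by (simp_all split: if_splits)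
    have e3: "Suc (k+2) = k+3" "k+2-1 = k+1" by simp_all
    have "(2 \<le> k+2 \<and> k+1 \<notin> C2) \<or> (k+2 < k+5 \<and> k+3 \<notin> C2)"
      using mvcD3[OF mC2 c2_2] unfolding e3 .
    then have c2_1: "k+1 \<notin> C2" using d2 by blast
    have a1: "k+1 \<in> U" using u2 by blast
    have "(1::nat) + 0 = (if k+1 \<in> C1 then 1 else 0) + (if k+1 \<in> C2 then 1 else 0)"
      using cnt[of "k+1"] by (simp only: a1 V(5) if_True if_False)
    then have c1_1: "k+1 \<in> C1" using c2_1 by (simp only: c2_1 if_False split: if_splits)
    have ej: "j+4 = k+3" "j+3 = k+2" "j+2 = k+1" using j by simp_all
    have Li1': "i1 < length (rooted_list (k+1)) \<and> rooted_list (k+3) ! i1 = add_mset (k+2) (rooted_list (k+1) ! i1)"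
      using L2_idx[of i1 j, unfolded ej] Li1 memi1[OF c1_2] by simp
    have Liw': "iw < length (rooted_list (k+1)) \<and> rooted_list (k+3) ! iw = add_mset (k+2) (rooted_list (k+1) ! iw)"
      using L2_idx[of iw j, unfolded ej] Liw memiw W by simp
    have m1: "k+1 \<in># rooted_list (k+1) ! i1"
      using memi1[OF c1_1] Li1' by simp
    have inset: "rooted_list (k+1) ! i1 \<in> set (rooted_list (k+1))" using Li1' by simp
    have k2: "2 \<le> k+1" using j by simp
    obtain E where E: "rooted_list (k+1) ! i1 = mset_set E" "mvc (k+1) E"
      using soundness[OF k2 inset] by auto
    have fE: "finite E" using E(2) mvc_fin by blast
    have "k+1 \<in> E" using m1 fE unfolding E(1) by simp
    then have "k+1-1 \<notin> E" using top_excl[OF E(2)] by blast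
    then have n2: "k+1-1 \<notin># rooted_list (k+1) ! i1" using fE unfolding E(1) by simp
    have "k \<in> W" using V(6) u2 W by auto
    then have "k \<in># rooted_list (k+3) ! iw" using memiw[of k] by simp
    then have w2: "k+1-1 \<in># rooted_list (k+1) ! iw" using Liw' by simp
    show "iw < i1" using L1[of "k+1" iw i1] w2 n2 Li1' Liw' j by simp
  qed
  show ?thesis using iw1 iw2 by simp
qed


lemma P_mvc:
  assumes mU: "mvc (k+5) U" and u1: "k+1 \<in> U"
  shows "mvc (k+5) ((U \<inter> {..k+1}) \<union> {k+3, k+5})"
proof -
  let ?P = "(U \<inter> {..k+1}) \<union> {k+3, k+5}"
  have s: "?P \<subseteq> {1..k+5}" using mvcD1[OF mU] by auto
  have e: "i \<in> ?P \<or> Suc i \<in> ?P" if i: "1 \<le> i" "i < k+5" for i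
  proof (cases "i \<le> k")
    case True
    then have "i \<in> U \<or> Suc i \<in> U" using mvcD2[OF mU i] by blast
    then show ?thesis using True by auto
  next
    case False
    then have "i = k+1 \<or> i = k+2 \<or> i = k+3 \<or> i = k+4" using i by linarith
    then show ?thesis using u1 by auto
  qed
  have p: "(2 \<le> c \<and> c - 1 \<notin> ?P) \<or> (c < k+5 \<and> Suc c \<notin> ?P)" if c: "c \<in> ?P" for c
  proof -
    consider "c \<le> k" | "c = k+1" | "c = k+3" | "c = k+5" using c by fastforce
    then show ?thesis
    proof cases
      case 1
      then have cU: "c \<in> U" using c by auto
      have "(2 \<le> c \<and> c - 1 \<notin> U) \<or> (c < k+5 \<and> Suc c \<notin> U)" using mvcD3[OF mU cU] .
      then show ?thesis using 1 by auto
    qed auto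
  qed
  show ?thesis unfolding mvc_def using s e p by blast
qed

lemma W_mvc:
  assumes mV: "mvc (k+5) V" and v1: "k+1 \<notin> V"
  shows "mvc (k+5) ((V \<inter> {..k+1}) \<union> {k+2, k+4})"
proof -
  let ?P = "(V \<inter> {..k+1}) \<union> {k+2, k+4}"
  have s: "?P \<subseteq> {1..k+5}" using mvcD1[OF mV] by auto
  have e: "i \<in> ?P \<or> Suc i \<in> ?P" if i: "1 \<le> i" "i < k+5" for i
  proof (cases "i \<le> k")
    case True
    then have "i \<in> V \<or> Suc i \<in> V" using mvcD2[OF mV i] by blast
    then show ?thesis using True by auto
  next
    case False
    then have "i = k+1 \<or> i = k+2 \<or> i = k+3 \<or> i = k+4" using i by linarith
    then show ?thesis by auto
  qed
  have p: "(2 \<le> c \<and> c - 1 \<notin> ?P) \<or> (c < k+5 \<and> Suc c \<notin> ?P)" if c: "c \<in> ?P" for c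
  proof -
    show ?thesis
    proof (cases "c \<le> k")
      case True
      then have cU: "c \<in> V" using c by auto
      have "(2 \<le> c \<and> c - 1 \<notin> V) \<or> (c < k+5 \<and> Suc c \<notin> V)" using mvcD3[OF mV cU] .
      then show ?thesis using True by auto
    next
      case False
      have "c \<notin> V \<inter> {..k+1}"
      proof
        assume h: "c \<in> V \<inter> {..k+1}"
        then have "c = k+1" using False by auto
        then show False using v1 h by auto
      qed
      then have "c = k+2 \<or> c = k+4" using c by auto
      then show ?thesis using v1 by auto
    qed
  qed
  show ?thesis unfolding mvc_def using s e p by blast
qed


lemma gens_mvc: "u \<in> cover_gens m \<Longrightarrow> \<exists>U. u = mset_set U \<and> mvc m U"
  unfolding cover_gens_def using mvc_iff by blast

lemma mvc_gens: "mvc m U \<Longrightarrow> mset_set U \<in> cover_gens m"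
  unfolding cover_gens_def using mvc_iff by blast

lemma main_k:
  assumes uG: "u \<in> cover_gens (k+5)" and vG: "v \<in> cover_gens (k+5)"
    and us: "{#k+4, k+1#} \<subseteq># u" and vs: "{#k+5, k+2#} \<subseteq># v"
  shows "u + v \<notin> min_gens_sq (cover_gens (k+5)) \<and>
         (\<exists>p \<in> cover_gens (k+5). \<exists>w \<in> cover_gens (k+5).
             p + w \<subseteq># u + v \<and> rooted_gt (k+5) (p + w) (u + v))"
proof -
  obtain U where U: "u = mset_set U" "mvc (k+5) U" using gens_mvc[OF uG] by blast
  obtain V where V: "v = mset_set V" "mvc (k+5) V" using gens_mvc[OF vG] by blast
  have fU: "finite U" using U(2) mvc_fin by blast
  have fV: "finite V" using V(2) mvc_fin by blast
  have u4: "k+4 \<in> U" using mset_subset_eqD[OF us, of "k+4"] fU U(1) by simp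
  have u1: "k+1 \<in> U" using mset_subset_eqD[OF us, of "k+1"] fU U(1) by simp
  have v5: "k+5 \<in> V" using mset_subset_eqD[OF vs, of "k+5"] fV V(1) by simp
  have v2: "k+2 \<in> V" using mset_subset_eqD[OF vs, of "k+2"] fV V(1) by simp
  have ee: "k+3+2 = k+5" "k+3+1 = k+4" "k+2+3 = k+5" "k+2+2 = k+4" "k+2+1 = k+3" by simp_all
  have u5: "k+5 \<notin> U" using decomp1[of "k+3" U, unfolded ee] U(2) u4 by blast
  have dV: "k+4 \<notin> V \<and> k+3 \<in> V" using decomp2[of "k+2" V, unfolded ee] V(2) v5 by blast
  have v4: "k+4 \<notin> V" and v3: "k+3 \<in> V" using dV by auto
  have e3: "Suc (k+2) = k+3" "k+2-1 = k+1" "Suc (k+3) = k+4" "k+3-1 = k+2" "Suc (k+1) = k+2" "k+1-1 = k" by simp_all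
  have "(2 \<le> k+2 \<and> k+1 \<notin> V) \<or> (k+2 < k+5 \<and> k+3 \<notin> V)"
    using mvcD3[OF V(2) v2] unfolding e3 .
  then have v1: "k+1 \<notin> V" using v3 by blast
  have v0: "1 \<le> k \<longrightarrow> k \<in> V"
  proof
    assume "1 \<le> k"
    then have "k \<in> V \<or> Suc k \<in> V" using mvcD2[OF V(2), of k] by simp
    then show "k \<in> V" using v1 by simp
  qed
  have ucases: "(k+3 \<in> U \<and> k+2 \<notin> U) \<or> (k+2 \<in> U \<and> k+3 \<notin> U \<and> 1 \<le> k \<and> k \<notin> U \<and> k+1 \<in> U)"
  proof (cases "k+3 \<in> U")
    case True
    have "(2 \<le> k+3 \<and> k+2 \<notin> U) \<or> (k+3 < k+5 \<and> k+4 \<notin> U)"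
      using mvcD3[OF U(2) True] unfolding e3 .
    then show ?thesis using True u4 by blast
  next
    case False
    have "k+2 \<in> U \<or> Suc (k+2) \<in> U" using mvcD2[OF U(2), of "k+2"] by simp
    then have u2: "k+2 \<in> U" using False unfolding e3 by blast
    have "(2 \<le> k+1 \<and> k+1-1 \<notin> U) \<or> (k+1 < k+5 \<and> Suc (k+1) \<notin> U)"
      using mvcD3[OF U(2) u1] .
    then have "2 \<le> k+1 \<and> k \<notin> U" using u2 unfolding e3 by blast
    then show ?thesis using False u2 u1 by auto
  qed
  define P where "P = (U \<inter> {..k+1}) \<union> {k+3, k+5}"
  define W where "W = (V \<inter> {..k+1}) \<union> {k+2, k+4}"
  have mP: "mvc (k+5) P" unfolding P_def by (rule P_mvc[OF U(2) u1])
  have mW: "mvc (k+5) W" unfolding W_def by (rule W_mvc[OF V(2) v1])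
  have fP: "finite P" using mP mvc_fin by blast
  have fW: "finite W" using mW mvc_fin by blast
  define p where "p = mset_set P"
  define w where "w = mset_set W"
  have pG: "p \<in> cover_gens (k+5)" unfolding p_def by (rule mvc_gens[OF mP])
  have wG: "w \<in> cover_gens (k+5)" unfolding w_def by (rule mvc_gens[OF mW])
  have cnt_le: "(if a \<in> P then 1 else 0) + (if a \<in> W then 1 else 0) \<le>
       (if a \<in> U then 1 else 0) + (if a \<in> V then (1::nat) else 0)" for a
  proof -
    have "a \<le> k+1 \<or> a = k+2 \<or> a = k+3 \<or> a = k+4 \<or> a = k+5 \<or> a > k+5" by linarith
    moreover have "a > k+5 \<Longrightarrow> a \<notin> U \<and> a \<notin> V \<and> a \<notin> P \<and> a \<notin> W"
      using mvcD1[OF U(2), of a] mvcD1[OF V(2), of a] mvcD1[OF mP, of a] mvcD1[OF mW, of a] by auto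
    moreover have "a \<le> k+1 \<Longrightarrow> (a \<in> P \<longleftrightarrow> a \<in> U) \<and> (a \<in> W \<longleftrightarrow> a \<in> V)"
      unfolding P_def W_def by auto
    moreover have "a = k+2 \<Longrightarrow> a \<notin> P \<and> a \<in> W" unfolding P_def W_def by auto
    moreover have "a = k+3 \<Longrightarrow> a \<in> P \<and> a \<notin> W" unfolding P_def W_def by auto
    moreover have "a = k+4 \<Longrightarrow> a \<notin> P \<and> a \<in> W" unfolding P_def W_def by auto
    moreover have "a = k+5 \<Longrightarrow> a \<in> P \<and> a \<notin> W" unfolding P_def W_def by auto
    ultimately show ?thesis using v2 v3 u4 v5 by (elim disjE) auto
  qed
  have sub: "p + w \<subseteq># u + v"
  proof (rule mset_subset_eqI)
    fix a show "count (p + w) a \<le> count (u + v) a"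
      unfolding p_def w_def U(1) V(1) count_union cnt_ms[OF fP] cnt_ms[OF fW] cnt_ms[OF fU] cnt_ms[OF fV]
      by (rule cnt_le)
  qed
  have neq: "p + w \<noteq> u + v"
  proof
    assume h: "p + w = u + v"
    have "k+3 \<in> U \<or> k+2 \<in> U" using ucases by blast
    then obtain a where a: "a \<in> U" "a \<in> V" "a \<notin> P \<or> a \<notin> W" using v2 v3 unfolding P_def W_def by auto
    have "count (p + w) a = count (u + v) a" using h by simp
    then show False unfolding p_def w_def U(1) V(1) count_union cnt_ms[OF fP] cnt_ms[OF fW] cnt_ms[OF fU] cnt_ms[OF fV]
      using a by (auto split: if_splits)
  qed
  have ssub: "p + w \<subset># u + v" using sub neq by (simp add: subset_mset.le_neq_trans)
  have part1: "u + v \<notin> min_gens_sq (cover_gens (k+5))"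
  proof
    assume "u + v \<in> min_gens_sq (cover_gens (k+5))"
    moreover have "p + w \<in> F2 (cover_gens (k+5))" unfolding F2_def using pG wG by blast
    ultimately show False using ssub unfolding min_gens_sq_def by blast
  qed
  let ?R = "rooted_list (k+5)"
  let ?L = "length ?R"
  have k2: "2 \<le> k+5" by simp
  have uR: "u \<in> set ?R" unfolding U(1) by (rule completeness[OF k2 U(2)])
  have vR: "v \<in> set ?R" unfolding V(1) by (rule completeness[OF k2 V(2)])
  have pR: "p \<in> set ?R" unfolding p_def by (rule completeness[OF k2 mP])
  have wR: "w \<in> set ?R" unfolding w_def by (rule completeness[OF k2 mW])
  obtain iu where iu: "iu < ?L" "?R ! iu = u" using uR by (meson in_set_conv_nth)
  obtain iv where iv: "iv < ?L" "?R ! iv = v" using vR by (meson in_set_conv_nth)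
  obtain ip where ip: "ip < ?L" "?R ! ip = p" using pR by (meson in_set_conv_nth)
  obtain iw where iw: "iw < ?L" "?R ! iw = w" using wR by (meson in_set_conv_nth)
  have a0: "ev ?L iw ip \<in> expressions ?R (p + w)"
    using E1[OF iw(1) ip(1)] iw(2) ip(2) by (simp add: add.commute)
  have au: "ev ?L iu iv \<in> expressions ?R (u + v)"
    using E1[OF iu(1) iv(1)] iu(2) iv(2) by simp
  define mx1 where "mx1 = max_expression ?R (u + v)"
  define mx2 where "mx2 = max_expression ?R (p + w)"
  have M1: "mx1 \<in> expressions ?R (u + v)" using MAX[OF au] unfolding mx1_def by blast
  have M2: "ev ?L iw ip = mx2 \<or> List.lexordp (<) (ev ?L iw ip) mx2"
    using MAX[OF a0] a0 unfolding mx2_def by blast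
  obtain i j where ij: "i < ?L" "j < ?L" "mx1 = ev ?L i j" "u + v = ?R ! i + ?R ! j"
    using E2[OF M1] by blast
  obtain Ci where Ci: "?R ! i = mset_set Ci" "mvc (k+5) Ci"
    using soundness[OF k2 nth_mem[OF ij(1)]] by blast
  obtain Cj where Cj: "?R ! j = mset_set Cj" "mvc (k+5) Cj"
    using soundness[OF k2 nth_mem[OF ij(2)]] by blast
  have fCi: "finite Ci" using Ci(2) mvc_fin by blast
  have fCj: "finite Cj" using Cj(2) mvc_fin by blast
  have cnt: "(if x \<in> U then 1 else 0) + (if x \<in> V then 1 else 0) =
                   (if x \<in> Ci then 1 else 0) + (if x \<in> Cj then (1::nat) else 0)" for x
  proof -
    have "count (u + v) x = count (?R ! i + ?R ! j) x" using ij(4) by simp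
    then show ?thesis unfolding U(1) V(1) Ci(1) Cj(1) count_union cnt_ms[OF fU] cnt_ms[OF fV]
      cnt_ms[OF fCi] cnt_ms[OF fCj] .
  qed
  have "(1::nat) + 0 = (if k+4 \<in> Ci then 1 else 0) + (if k+4 \<in> Cj then 1 else 0)"
    using cnt[of "k+4"] by (simp only: u4 v4 if_True if_False)
  then have "k+4 \<in> Ci \<or> k+4 \<in> Cj" by (auto split: if_splits)
  have Wd: "W = (V \<inter> {..k+1}) \<union> {k+2, k+4}" by (rule W_def)
  have wR': "?R ! iw = mset_set W" using iw(2) unfolding w_def .
  have lt: "iw < i \<and> iw < j"
    using \<open>k+4 \<in> Ci \<or> k+4 \<in> Cj\<close>
  proof
    assume "k+4 \<in> Ci"
    then show ?thesis
      using claim[OF U(2) V(2) u4 u5 ucases v5 v3 v2 v4 v1 v0 Wd cnt Ci(2) Cj(2) _ Ci(1) Cj(1) wR' ij(1) ij(2) iw(1)]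
      by blast
  next
    assume "k+4 \<in> Cj"
    have cnt': "(if x \<in> U then 1 else 0) + (if x \<in> V then 1 else 0) =
                   (if x \<in> Cj then 1 else 0) + (if x \<in> Ci then (1::nat) else 0)" for x
      using cnt[of x] by simp
    show ?thesis
      using claim[OF U(2) V(2) u4 u5 ucases v5 v3 v2 v4 v1 v0 Wd cnt' Cj(2) Ci(2) \<open>k+4 \<in> Cj\<close> Cj(1) Ci(1) wR' ij(2) ij(1) iw(1)]
      by blast
  qed
  have e1: "k + 5 - 1 = k+4" by simp
  have iwp: "iw < ip"
  proof (rule L1[OF k2 iw(1) ip(1)])
    show "k + 5 - 1 \<in># ?R ! iw" unfolding e1 iw(2) w_def using fW by (simp add: W_def)
    show "k + 5 - 1 \<notin># ?R ! ip" unfolding e1 ip(2) p_def using fP by (simp add: P_def)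
  qed
  have "List.lexordp (<) mx1 (ev ?L iw ip)"
    unfolding ij(3) by (rule E3) (use lt iwp ij iw ip in auto)
  then have "List.lexordp (<) mx1 mx2"
    using M2 unfolding lex_conv by (metis lexordp_trans)
  then have "rooted_gt (k+5) (p + w) (u + v)"
    unfolding rooted_gt_def mx1_def mx2_def .
  then show ?thesis using part1 pG wG sub by blast
qed


theorem lemma4p1:
  fixes n :: nat and u v :: monomial
  assumes "n \<ge> 5"
    and "u \<in> cover_gens n" and "v \<in> cover_gens n"
    and "{#n - 1, n - 4#} \<subseteq># u"
    and "{#n, n - 3#} \<subseteq># v"
  shows "u + v \<notin> min_gens_sq (cover_gens n) \<and>
         (\<exists>p \<in> cover_gens n. \<exists>w \<in> cover_gens n.
             p + w \<subseteq># u + v \<and> rooted_gt n (p + w) (u + v))"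
proof -
  obtain k where k: "n = k + 5" using assms(1) by (metis add.commute le_Suc_ex)
  have e: "n - 1 = k+4" "n - 4 = k+1" "n - 3 = k+2" using k by simp_all
  have us: "{#k+4, k+1#} \<subseteq># u" using assms(4) unfolding e .
  have vs: "{#n, k+2#} \<subseteq># v" using assms(5) unfolding e .
  show ?thesis
    using main_k[of u k v] assms(2,3) us vs unfolding k by blast
qed

end
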